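(* Consider the species $T_{100},T_{010},T_{001}$ with concentrations $x,y,z$, complexes $C_1=2T_{100}$, $C_2=2T_{010}$, $C_3=2T_{001}$, $C_4=T_{100}+T_{010}$, $C_5=T_{100}+T_{001}$, $C_6=T_{010}+T_{001}$, and the network $\mathcal N$ with the 18 reactions $C_1\to C_4,\ C_1\to C_5,\ C_2\to C_4,\ C_2\to C_6,\ C_3\to C_5,\ C_3\to C_6,\ C_4\to C_1,\ C_4\to C_2,\ C_4\to C_5,\ C_4\to C_6,\ C_5\to C_1,\ C_5\to C_3,\ C_5\to C_4,\ C_5\to C_6,\ C_6\to C_2,\ C_6\to C_3,\ C_6\to C_4,\ C_6\to C_5$, with rate constants $k(i,j)=i$ for each reaction $C_i\to C_j$. Then the mass-action system of $\mathcal N$ coincides with the mass-action system of the network $\mathcal N'$ with reactions $C_1\rightleftarrows C_6$, $C_2\rightleftarrows C_5$, $C_3\rightleftarrows C_4$ and rate constants $k(1,6)=1$, $k(6,1)=6$, $k(2,5)=2$, $k(5,2)=5$, $k(3,4)=3$, $k(4,3)=4$; $\mathcal N'$ is weakly reversible with deficiency one; and this mass-action system has exactly one positive equilibrium in each positive stoichiometric compatibility class $\{(x,y,z)\in\mathbb R^3_{>0}: x+y+z=c\}$, $c>0$. *)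

theory Defs
  imports "HOL-Analysis.Analysis"
begin

text \<open>Complexes over the three species T100, T010, T001 (concentrations x, y, z),
  given by their stoichiometric coefficient triples.\<close>
type_synonym cplx = "nat \<times> nat \<times> nat"
type_synonym network = "(cplx \<times> cplx) set"
type_synonym state = "real \<times> real \<times> real"

definition cv :: "cplx \<Rightarrow> state" where
  "cv = (\<lambda>(a, b, c). (real a, real b, real c))"

definition monom :: "state \<Rightarrow> cplx \<Rightarrow> real" where
  "monom s y = (case s of (x1, x2, x3) \<Rightarrow> case y of (a, b, c) \<Rightarrow> x1 ^ a * x2 ^ b * x3 ^ c)"

definition mass_action :: "network \<Rightarrow> (cplx \<Rightarrow> cplx \<Rightarrow> real) \<Rightarrow> state \<Rightarrow> state" where
  "mass_action N k s = (\<Sum>(y, y')\<in>N. (k y y' * monom s y) *\<^sub>R (cv y' - cv y))"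

definition complexes :: "network \<Rightarrow> cplx set" where
  "complexes N = fst ` N \<union> snd ` N"

definition weakly_reversible :: "network \<Rightarrow> bool" where
  "weakly_reversible N \<longleftrightarrow> (\<forall>(y, y')\<in>N. (y', y) \<in> N\<^sup>*)"

definition linkage_classes :: "network \<Rightarrow> cplx set set" where
  "linkage_classes N = complexes N // ((N \<union> N\<inverse>)\<^sup>*)"

definition stoich_subspace :: "network \<Rightarrow> state set" where
  "stoich_subspace N = span {cv y' - cv y | y y'. (y, y') \<in> N}"

definition deficiency :: "network \<Rightarrow> int" where
  "deficiency N = int (card (complexes N)) - int (card (linkage_classes N))
                  - int (dim (stoich_subspace N))"

definition positive :: "state \<Rightarrow> bool" where
  "positive s \<longleftrightarrow> (case s of (x, y, z) \<Rightarrow> x > 0 \<and> y > 0 \<and> z > 0)"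

definition positive_equilibrium :: "network \<Rightarrow> (cplx \<Rightarrow> cplx \<Rightarrow> real) \<Rightarrow> state \<Rightarrow> bool" where
  "positive_equilibrium N k s \<longleftrightarrow> positive s \<and> mass_action N k s = 0"

fun C :: "nat \<Rightarrow> cplx" where
  "C (Suc 0) = (2, 0, 0)"
| "C (Suc (Suc 0)) = (0, 2, 0)"
| "C (Suc (Suc (Suc 0))) = (0, 0, 2)"
| "C (Suc (Suc (Suc (Suc 0)))) = (1, 1, 0)"
| "C (Suc (Suc (Suc (Suc (Suc 0))))) = (1, 0, 1)"
| "C (Suc (Suc (Suc (Suc (Suc (Suc 0)))))) = (0, 1, 1)"
| "C _ = (0, 0, 0)"

definition netN :: network where
  "netN = (\<lambda>(i, j). (C i, C j)) `
     {(1,4),(1,5),(2,4),(2,6),(3,5),(3,6),(4,1),(4,2),(4,5),(4,6),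
      (5,1),(5,3),(5,4),(5,6),(6,2),(6,3),(6,4),(6,5)}"

definition netN' :: network where
  "netN' = (\<lambda>(i, j). (C i, C j)) ` {(1,6),(6,1),(2,5),(5,2),(3,4),(4,3)}"

text \<open>Rate constants k(i,j) = i for a reaction C_i \<rightarrow> C_j (for both networks).\<close>
definition rate :: "cplx \<Rightarrow> cplx \<Rightarrow> real" where
  "rate y y' = (if \<exists>i\<in>{1..6}. C i = y then real (THE i. i \<in> {1..6} \<and> C i = y) else 0)"

end

theory Submission
  imports Defs
begin


lemma C_vals: "C 1 = (2,0,0)" "C 2 = (0,2,0)" "C 3 = (0,0,2)" "C 4 = (1,1,0)"
  "C 5 = (1,0,1)" "C 6 = (0,1,1)"
  by (simp_all add: eval_nat_numeral)

lemma rate_C: assumes "i \<in> {1..6}" shows "rate (C i) y' = real i"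
proof -
  have inj: "\<And>j. j \<in> {1..6} \<Longrightarrow> C j = C i \<Longrightarrow> j = i"
  proof -
    fix j assume j: "j \<in> {1..(6::nat)}" and e: "C j = C i"
    have "j = 1 \<or> j = 2 \<or> j = 3 \<or> j = 4 \<or> j = 5 \<or> j = 6" using j by auto
    moreover have "i = 1 \<or> i = 2 \<or> i = 3 \<or> i = 4 \<or> i = 5 \<or> i = 6" using assms by auto
    ultimately show "j = i" using e by (auto simp: C_vals)
  qed
  have "(THE j. j \<in> {1..6} \<and> C j = C i) = i"
    by (rule the_equality) (use assms inj in auto)
  thus ?thesis using assms unfolding rate_def by auto
qed

lemma rates: "rate (2,0,0) y = 1" "rate (0,2,0) y = 2" "rate (0,0,2) y = 3"
  "rate (1,1,0) y = 4" "rate (1,0,1) y = 5" "rate (0,1,1) y = 6"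
  using rate_C[of 1] rate_C[of 2] rate_C[of 3] rate_C[of 4] rate_C[of 5] rate_C[of 6]
  by (auto simp: C_vals)

lemma netN'_eq: "netN' = {((2,0,0),(0,1,1)), ((0,1,1),(2,0,0)), ((0,2,0),(1,0,1)),
   ((1,0,1),(0,2,0)), ((0,0,2),(1,1,0)), ((1,1,0),(0,0,2))}"
  by (simp add: netN'_def C_vals)

lemma netN_eq: "netN = {((2,0,0),(1,1,0)), ((2,0,0),(1,0,1)), ((0,2,0),(1,1,0)), ((0,2,0),(0,1,1)),
  ((0,0,2),(1,0,1)), ((0,0,2),(0,1,1)), ((1,1,0),(2,0,0)), ((1,1,0),(0,2,0)), ((1,1,0),(1,0,1)),
  ((1,1,0),(0,1,1)), ((1,0,1),(2,0,0)), ((1,0,1),(0,0,2)), ((1,0,1),(1,1,0)), ((1,0,1),(0,1,1)),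
  ((0,1,1),(0,2,0)), ((0,1,1),(0,0,2)), ((0,1,1),(1,1,0)), ((0,1,1),(1,0,1))}"
  by (simp add: netN_def C_vals)

lemmas rates' = rates[unfolded One_nat_def]

definition F :: "state \<Rightarrow> state" where
  "F s = (case s of (x,y,z) \<Rightarrow>
     let a = x^2 - 6*y*z; b = 2*y^2 - 5*x*z; c = 3*z^2 - 4*x*y in
     (-2*a+b+c, a-2*b+c, a+b-2*c))"

lemma MA': "mass_action netN' rate (x,y,z) = F (x,y,z)"
  unfolding mass_action_def netN'_eq
  by (simp add: rates rates' cv_def monom_def F_def Let_def algebra_simps power2_eq_square)

lemma MA: "mass_action netN rate (x,y,z) = F (x,y,z)"
  unfolding mass_action_def netN_eq
  by (simp add: rates rates' cv_def monom_def F_def Let_def algebra_simps power2_eq_square)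

lemma wr: "weakly_reversible netN'"
  unfolding weakly_reversible_def netN'_eq by (auto intro: r_into_rtrancl)

lemma cx: "complexes netN' = {(2,0,0),(0,1,1),(0,2,0),(1,0,1),(0,0,2),(1,1,0)}"
  unfolding complexes_def netN'_eq by auto

lemma card_cx: "card (complexes netN') = 6"
  unfolding cx by simp

lemma sym': "netN' \<union> netN'\<inverse> = netN'"
  unfolding netN'_eq by auto
lemma stepR: "(a,b) \<in> Id \<union> netN' \<Longrightarrow> (b,c) \<in> netN' \<Longrightarrow> (a,c) \<in> Id \<union> netN'"
  unfolding netN'_eq by (simp only: Un_iff pair_in_Id_conv insert_iff empty_iff prod.inject) (elim disjE; simp)

lemma rt: "netN'\<^sup>* = Id \<union> netN'"
proof
  show "netN'\<^sup>* \<subseteq> Id \<union> netN'"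
  proof (rule subrelI)
    fix a b assume "(a,b) \<in> netN'\<^sup>*"
    then show "(a,b) \<in> Id \<union> netN'"
    proof (induction rule: rtrancl_induct)
      case base then show ?case by simp
    next
      case (step b c) show ?case by (rule stepR[OF step.IH step.hyps(2)])
    qed
  qed
qed (auto)

lemma img: "(Id \<union> netN') `` {(2,0,0)} = {(2,0,0),(0,1,1)}"
  "(Id \<union> netN') `` {(0,1,1)} = {(2,0,0),(0,1,1)}"
  "(Id \<union> netN') `` {(0,2,0)} = {(0,2,0),(1,0,1)}"
  "(Id \<union> netN') `` {(1,0,1)} = {(0,2,0),(1,0,1)}"
  "(Id \<union> netN') `` {(0,0,2)} = {(0,0,2),(1,1,0)}"
  "(Id \<union> netN') `` {(1,1,0)} = {(0,0,2),(1,1,0)}"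
  by (auto simp: netN'_eq)

lemma lc: "linkage_classes netN' = {{(2,0,0),(0,1,1)}, {(0,2,0),(1,0,1)}, {(0,0,2),(1,1,0)}}"
  unfolding linkage_classes_def sym' rt cx quotient_def
  by (simp only: UN_insert UN_empty img Un_empty_right Un_insert_left Un_empty_left) (simp add: insert_commute)

lemma card_lc: "card (linkage_classes netN') = 3"
  unfolding lc by (simp add: doubleton_eq_iff)
lemma ss_set: "{cv y' - cv y | y y'. (y, y') \<in> netN'} =
  {(-2,1,1),(2,-1,-1),(1,-2,1),(-1,2,-1),(1,1,-2),(-1,-1,2)}"
proof -
  have "{cv y' - cv y | y y'. (y, y') \<in> netN'} = (\<lambda>(y,y'). cv y' - cv y) ` netN'" by force
  also have "\<dots> = {(-2,1,1),(2,-1,-1),(1,-2,1),(-1,2,-1),(1,1,-2),(-1,-1,2)}"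
    unfolding netN'_eq by (simp add: cv_def)
  finally show ?thesis .
qed

lemma dimS: "dim (stoich_subspace netN') = 2"
proof -
  define u :: state where "u = (-2,1,1)"
  define v :: state where "v = (1,-2,1)"
  have e: "(2,-1,-1) = - u" "(-1,2,-1) = -v" "(1,1,-2) = -(u+v)" "(-1,-1,2) = u + v"
    by (simp_all add: u_def v_def)
  have "span {(-2,1,1),(2,-1,-1),(1,-2,1),(-1,2,-1),(1,1,-2),(-1,-1,2)} = span {u, v}"
  proof -
    have su: "u \<in> span {u,v}" and sv: "v \<in> span {u,v}" by (simp_all add: span_base)
    have "{(-2,1,1),(2,-1,-1),(1,-2,1),(-1,2,-1),(1,1,-2),(-1,-1,2)} \<subseteq> span {u,v}"
      unfolding e insert_subset
      using su sv span_neg[OF su] span_neg[OF sv] span_add[OF su sv] span_neg[OF span_add[OF su sv]]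
      by (simp add: u_def v_def)
    moreover have "{u,v} \<subseteq> span {(-2,1,1),(2,-1,-1),(1,-2,1),(-1,2,-1),(1,1,-2),(-1,-1,2)}"
      by (simp add: u_def v_def span_base)
    ultimately show ?thesis by (simp only: span_eq)
  qed
  moreover have "independent {u, v}"
  proof -
    have "u \<notin> span {v}"
    proof
      assume "u \<in> span {v}"
      then obtain k where "u = k *\<^sub>R v" by (auto simp: span_singleton)
      then show False by (auto simp: u_def v_def)
    qed
    moreover have "v \<noteq> 0" by (simp add: v_def zero_prod_def)
    moreover have "u \<noteq> v" by (simp add: u_def v_def)
    ultimately show ?thesis by (simp add: independent_insert)
  qed
  moreover have "card {u, v} = 2" by (simp add: u_def v_def)
  ultimately show ?thesis
    unfolding stoich_subspace_def ss_set by (simp add: dim_eq_card_independent)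
qed

lemma defi: "deficiency netN' = 1"
  unfolding deficiency_def card_cx card_lc dimS by simp


lemma lin3: "((-2*a+b+c, a-2*b+c, a+b-2*c) = (0::state)) \<longleftrightarrow> (a = b \<and> b = (c::real))"
  by (auto simp: zero_prod_def)

definition EA :: "real \<Rightarrow> real \<Rightarrow> real \<Rightarrow> bool" where
  "EA x y z \<longleftrightarrow> x*x + 5*(x*z) = 2*(y*y) + 6*(y*z) \<and> 2*(y*y) + 4*(x*y) = 3*(z*z) + 5*(x*z)"

lemma F0: "F (x,y,z) = 0 \<longleftrightarrow> EA x y z"
proof -
  have "F (x,y,z) = 0 \<longleftrightarrow> (x^2 - 6*y*z = 2*y^2 - 5*x*z \<and> 2*y^2 - 5*x*z = 3*z^2 - 4*x*y)"
    unfolding F_def Let_def prod.case by (rule lin3)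
  also have "\<dots> \<longleftrightarrow> EA x y z" unfolding EA_def power2_eq_square by (auto simp: algebra_simps)
  finally show ?thesis .
qed

lemma core:
  fixes t1 t2 t3 t4 a1 a2 a3 a4 m M :: real
  assumes "t1 \<ge> 0" "t2 \<ge> 0" "t3 \<ge> 0" "t4 \<ge> 0" "t1 + t2 > 0" "t1 + t2 = t3 + t4"
    "a1*t1 + a2*t2 = a3*t3 + a4*t4" "a1 \<ge> m" "a2 \<ge> m" "a3 \<le> M" "a4 \<le> M"
  shows "m \<le> M"
proof -
  have "m*t1 \<le> a1*t1" "m*t2 \<le> a2*t2" "a3*t3 \<le> M*t3" "a4*t4 \<le> M*t4"
    using assms by (simp_all add: mult_right_mono)
  moreover have "m*(t1+t2) = m*t1+m*t2" by (simp add: distrib_left)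
  moreover have "M*(t1+t2) = M*t3+M*t4" by (simp only: assms(6) distrib_left)
  ultimately have "m*(t1+t2) \<le> M*(t1+t2)" using assms(7) by linarith
  thus ?thesis using assms(5) by simp
qed

lemma uniq_ratio:
  fixes x y z p q r :: real
  assumes pos: "x > 0" "y > 0" "z > 0" "p > 0" "q > 0" "r > 0"
    and e: "EA x y z" "EA (p*x) (q*y) (r*z)"
  shows "p = q \<and> q = r"
proof -
  have A: "x*x + 5*(x*z) = 2*(y*y) + 6*(y*z)" and B: "2*(y*y) + 4*(x*y) = 3*(z*z) + 5*(x*z)"
    using e(1) by (auto simp: EA_def)
  have C: "x*x + 4*(x*y) = 3*(z*z) + 6*(y*z)" using A B by linarith
  have A': "(p*p)*(x*x) + (p*r)*(5*(x*z)) = (q*q)*(2*(y*y)) + (q*r)*(6*(y*z))"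
   and B': "(q*q)*(2*(y*y)) + (p*q)*(4*(x*y)) = (r*r)*(3*(z*z)) + (p*r)*(5*(x*z))"
    using e(2) by (auto simp: EA_def algebra_simps)
  have C': "(p*p)*(x*x) + (p*q)*(4*(x*y)) = (r*r)*(3*(z*z)) + (q*r)*(6*(y*z))"
    using A' B' by linarith
  have nn: "x*x \<ge> 0" "x*y \<ge> 0" "x*z \<ge> 0" "y*y \<ge> 0" "y*z \<ge> 0" "z*z \<ge> 0"
    "x*x > 0" "y*y > 0" "z*z > 0" "x*y > 0" "x*z > 0" "y*z > 0"
    using pos by auto
  have ps: "0 < x*x + 4*(x*y)" "0 < x*x+5*(x*z)" "0 < 2*(y*y)+4*(x*y)"
    "0 < 2*(y*y)+6*(y*z)" "0<3*(z*z)+5*(x*z)" "0<3*(z*z)+6*(y*z)" using nn by linarith+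
  have mono: "\<And>a b c::real. a \<ge> b \<Longrightarrow> c > 0 \<Longrightarrow> c*a \<ge> c*b" "\<And>a b c::real. a \<ge> b \<Longrightarrow> c > 0 \<Longrightarrow> a*c \<ge> b*c"
    by simp_all
  consider "p \<ge> q" "q \<ge> r" | "p \<ge> r" "r \<ge> q" | "q \<ge> p" "p \<ge> r" | "q \<ge> r" "r \<ge> p"
    | "r \<ge> p" "p \<ge> q" | "r \<ge> q" "q \<ge> p" by linarith
  then show ?thesis
  proof cases
    case 1
    have "p*q \<le> q*r"
      by (rule core[OF _ _ _ _ _ C C']) (use nn ps 1 pos mono in \<open>auto simp: mult.commute\<close>)
    then have "p \<le> r" using pos by (simp add: mult.commute)
    then show ?thesis using 1 by linarith
  next
    case 2
    have "p*r \<le> q*r"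
      by (rule core[OF _ _ _ _ _ A A']) (use nn ps 2 pos mono in \<open>auto simp: mult.commute\<close>)
    then have "p \<le> q" using pos by simp
    then show ?thesis using 2 by linarith
  next
    case 3
    have "p*q \<le> p*r"
      by (rule core[OF _ _ _ _ _ B B']) (use nn ps 3 pos mono in \<open>auto simp: mult.commute\<close>)
    then have "q \<le> r" using pos by simp
    then show ?thesis using 3 by linarith
  next
    case 4
    have "q*r \<le> p*r"
      by (rule core[OF _ _ _ _ _ A[symmetric] A'[symmetric]]) (use nn ps 4 pos mono in \<open>auto simp: mult.commute\<close>)
    then have "q \<le> p" using pos by simp
    then show ?thesis using 4 by linarith
  next
    case 5
    have "p*r \<le> p*q"
      by (rule core[OF _ _ _ _ _ B[symmetric] B'[symmetric]]) (use nn ps 5 pos mono in \<open>auto simp: mult.commute\<close>)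
    then have "r \<le> q" using pos by simp
    then show ?thesis using 5 by linarith
  next
    case 6
    have "q*r \<le> p*q"
      by (rule core[OF _ _ _ _ _ C[symmetric] C'[symmetric]]) (use nn ps 6 pos mono in \<open>auto simp: mult.commute\<close>)
    then have "r \<le> p" using pos by (simp add: mult.commute)
    then show ?thesis using 6 by linarith
  qed
qed



lemma EA_scale: assumes "EA x y z" shows "EA (t*x) (t*y) (t*z)"
proof -
  have A: "x*x + 5*(x*z) = 2*(y*y) + 6*(y*z)" and B: "2*(y*y) + 4*(x*y) = 3*(z*z) + 5*(x*z)"
    using assms by (auto simp: EA_def)
  have "(t*t)*(x*x + 5*(x*z)) = (t*t)*(2*(y*y) + 6*(y*z))" using A by simp
  moreover have "(t*t)*(2*(y*y) + 4*(x*y)) = (t*t)*(3*(z*z) + 5*(x*z))" using B by simp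
  ultimately show ?thesis unfolding EA_def by (simp add: algebra_simps)
qed

definition P :: "real \<Rightarrow> real" where
  "P m = (2+4*m)*(5*m-6)^2 - 3*(2-m^2)^2 - 5*m*(2-m^2)*(5*m-6)"

lemma exists_ray: "\<exists>x y z. x > 0 \<and> y > 0 \<and> z > 0 \<and> EA x y z"
proof -
  have c: "\<forall>x. 6/5 \<le> x \<and> x \<le> 7/5 \<longrightarrow> isCont P x"
    unfolding P_def by (auto intro!: continuous_intros)
  have a: "P (6/5) \<le> 0" and b: "0 \<le> P (7/5)" by (simp_all add: P_def power2_eq_square)
  obtain m where m: "6/5 \<le> m" "m \<le> 7/5" "P m = 0"
    using IVT[of P "6/5" 0 "7/5", OF a b _ c] by auto
  have a': "P (6/5) < 0" by (simp add: P_def power2_eq_square)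
  have "m \<noteq> 6/5" proof assume "m = 6/5" then have "P m = P (6/5)" by (rule arg_cong) then show False using m(3) a' by linarith qed
  hence d: "5*m - 6 > 0" using m(1) by linarith
  have "m*m \<le> 7/5*(7/5)" using m by (intro mult_mono) auto
  hence e: "2 - m*m > 0" by simp
  define z where "z = (2 - m*m)/(5*m-6)"
  have z: "z > 0" unfolding z_def using d e by simp
  have zd: "z*(5*m-6) = 2 - m*m" unfolding z_def using d by simp
  have A: "m*m + 5*(m*z) = 2*(1*1) + 6*(1*z)" using zd by (simp add: algebra_simps)
  have P0: "(2+4*m)*((5*m-6)*(5*m-6)) = 3*((2-m*m)*(2-m*m)) + 5*m*(2-m*m)*(5*m-6)"
    using m(3) unfolding P_def power2_eq_square by simp
  have "(2+4*m)*((5*m-6)*(5*m-6)) = (3*(z*z) + 5*(m*z))*((5*m-6)*(5*m-6))"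
    unfolding P0 zd[symmetric] by (simp add: algebra_simps)
  hence B: "2*(1*1) + 4*(m*1) = 3*(z*z) + 5*(m*z)" using d by simp
  show ?thesis using A B z d by (intro exI[of _ m] exI[of _ 1] exI[of _ z]) (auto simp: EA_def)
qed

lemma pe_iff: "positive_equilibrium netN' rate (x,y,z) \<longleftrightarrow> x > 0 \<and> y > 0 \<and> z > 0 \<and> EA x y z"
  unfolding positive_equilibrium_def positive_def MA' F0 by simp

theorem mainTheorem7:
  shows "mass_action netN rate = mass_action netN' rate
    \<and> weakly_reversible netN' \<and> deficiency netN' = 1
    \<and> (\<forall>c::real. c > 0 \<longrightarrow>
         (\<exists>!s. positive_equilibrium netN' rate s \<and> fst s + fst (snd s) + snd (snd s) = c))"
proof (intro conjI allI impI)
  show "mass_action netN rate = mass_action netN' rate"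
  proof
    fix s :: state
    obtain x y z where "s = (x,y,z)" by (cases s) auto
    then show "mass_action netN rate s = mass_action netN' rate s" by (simp add: MA MA')
  qed
  show "weakly_reversible netN'" by (rule wr)
  show "deficiency netN' = 1" by (rule defi)
  fix c :: real assume c: "c > 0"
  obtain x y z where xyz: "x > 0" "y > 0" "z > 0" "EA x y z" using exists_ray by blast
  define t where "t = c/(x+y+z)"
  have t: "t > 0" unfolding t_def using c xyz by simp
  have "t*(x+y+z) = c" unfolding t_def using xyz by simp
  hence sum: "t*x + t*y + t*z = c" by (simp add: algebra_simps)
  show "\<exists>!s. positive_equilibrium netN' rate s \<and> fst s + fst (snd s) + snd (snd s) = c"
  proof (rule ex1I[of _ "(t*x, t*y, t*z)"])
    show "positive_equilibrium netN' rate (t*x, t*y, t*z) \<and>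
      fst (t*x, t*y, t*z) + fst (snd (t*x, t*y, t*z)) + snd (snd (t*x, t*y, t*z)) = c"
      using pe_iff t xyz EA_scale[OF xyz(4)] sum by simp
  next
    fix s assume s: "positive_equilibrium netN' rate s \<and> fst s + fst (snd s) + snd (snd s) = c"
    obtain x' y' z' where s': "s = (x',y',z')" by (cases s) auto
    have h: "x' > 0" "y' > 0" "z' > 0" "EA x' y' z'" "x'+y'+z' = c" using s s' pe_iff by auto
    define X where "X = t*x" define Y where "Y = t*y" define Z where "Z = t*z"
    have H: "X > 0" "Y > 0" "Z > 0" "EA X Y Z" "X+Y+Z = c"
      unfolding X_def Y_def Z_def using t xyz EA_scale[OF xyz(4)] sum by auto
    define p where "p = x'/X" define q where "q = y'/Y" define r where "r = z'/Z"
    have pq: "x' = p*X" "y' = q*Y" "z' = r*Z" unfolding p_def q_def r_def using H by auto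
    have pos: "p > 0" "q > 0" "r > 0" unfolding p_def q_def r_def using H h by auto
    have "p = q \<and> q = r" by (rule uniq_ratio[OF H(1-3) pos H(4)]) (use h pq in simp)
    hence "p*(X+Y+Z) = c" using h pq by (simp add: algebra_simps)
    hence "p = 1" using H c by simp
    with \<open>p = q \<and> q = r\<close> pq s' show "s = (t*x, t*y, t*z)" by (simp add: X_def Y_def Z_def)
  qed
qed

end
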